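(* Let $n\ge1$, $0<\beta<1$, let $\Psi\in\mathcal{S}(\mathbb{R}^{n})$ with $\Psi(0)=1$, and let $g\in C^{0}((0,\beta)^{n},\mathbb{R}_{+})$ satisfy: (i) $\lim_{|x|\to 0^{+}} g(x)/|x| = 0$; (ii) for each $i\in\{1,\dots,n\}$, the map $x_i\mapsto g(x_1,\dots,x_i,\dots,x_n)$ is increasing on $(0,\beta)$. Let $A$ be an operator defined on $\mathcal{S}(\mathbb{R}^n)$ with values in functions on $\mathbb{R}^n$ such that, at least for $x\in(0,\beta)^{n}$, $$(Au)(x)=\int_{\mathbb{R}^{n}}u(g(x)z)\,\mathcal{F}\Psi(z)\,dz,\qquad u\in\mathcal{S}(\mathbb{R}^{n}).$$ Then $A$ cannot be extended to a bounded operator on $L^{2}(\mathbb{R}^{n})$, i.e. there is no constant $C>0$ with $\|Au\|_{L^2}\le C\|u\|_{L^2}$ for all $u\in\mathcal{S}(\mathbb{R}^n)$.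
   Context: $(0,\beta)^{n}=\prod_{j=1}^{n}(0,\beta)$. $\mathbb{R}_+$ denotes the nonnegative real numbers. $\mathcal{F}$ is the Fourier transform, $\mathcal{F}\Psi(z)=(2\pi)^{-n/2}\int e^{-iz\cdot\theta}\Psi(\theta)\,d\theta$. *)

theory Defs
  imports "HOL-Analysis.Analysis"
begin

definition partial_deriv :: "'n::finite \<Rightarrow> (real^'n \<Rightarrow> complex) \<Rightarrow> real^'n \<Rightarrow> complex" where
  "partial_deriv i f x = vector_derivative (\<lambda>t. f (x + t *\<^sub>R axis i 1)) (at 0)"

text \<open>Iterated partial derivative; a list of indices encodes a multi-index.\<close>
fun iter_partial :: "'n::finite list \<Rightarrow> (real^'n \<Rightarrow> complex) \<Rightarrow> real^'n \<Rightarrow> complex" where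
  "iter_partial [] f = f"
| "iter_partial (i # is) f = partial_deriv i (iter_partial is f)"

definition schwartz :: "(real^'n::finite \<Rightarrow> complex) \<Rightarrow> bool" where
  "schwartz f \<longleftrightarrow>
     (\<forall>is i x. (\<lambda>t. iter_partial is f (x + t *\<^sub>R axis i 1)) differentiable (at 0)) \<and>
     (\<forall>is. continuous_on UNIV (iter_partial is f)) \<and>
     (\<forall>is (m::nat). \<exists>C. \<forall>x. (1 + norm x) ^ m * norm (iter_partial is f x) \<le> C)"

definition fourier :: "(real^'n::finite \<Rightarrow> complex) \<Rightarrow> real^'n \<Rightarrow> complex" where
  "fourier \<Psi> z = complex_of_real ((2 * pi) powr (- real CARD('n) / 2)) *
      integral UNIV (\<lambda>\<theta>. exp (- (\<i> * complex_of_real (z \<bullet> \<theta>))) * \<Psi> \<theta>)"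

definition L2_norm_sq :: "(real^'n::finite \<Rightarrow> complex) \<Rightarrow> ennreal" where
  "L2_norm_sq f = (\<integral>\<^sup>+ x. ennreal ((norm (f x))\<^sup>2) \<partial>lborel)"

definition open_cube :: "real \<Rightarrow> (real^'n::finite) set" where
  "open_cube \<beta> = {x. \<forall>i. 0 < x $ i \<and> x $ i < \<beta>}"

end

theory Submission
  imports Defs "HOL-Probability.Probability"
begin

lemma lborel_prod_integral:
  fixes f :: "'a::euclidean_space \<Rightarrow> real \<Rightarrow> 'c::{real_normed_field,banach,second_countable_topology}"
  assumes int: "\<And>b. b \<in> Basis \<Longrightarrow> integrable lborel (f b)"
  shows "integrable lborel (\<lambda>x::'a. \<Prod>b\<in>Basis. f b (x \<bullet> b))"
    and "(\<integral>x. (\<Prod>b\<in>Basis. f b (x \<bullet> b)) \<partial>(lborel::'a measure)) = (\<Prod>b\<in>Basis. integral\<^sup>L lborel (f b))"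
proof -
  interpret product_sigma_finite "\<lambda>_::'a. (lborel::real measure)" by standard
  let ?T = "(\<lambda>f. \<Sum>b\<in>Basis. f b *\<^sub>R b) :: ('a \<Rightarrow> real) \<Rightarrow> 'a"
  have Tm: "?T \<in> measurable (\<Pi>\<^sub>M b\<in>Basis. lborel) borel" by measurable
  have [measurable]: "f b \<in> borel_measurable borel" if "b \<in> Basis" for b
    using int[OF that] by (simp add: borel_measurable_integrable)
  have gm: "(\<lambda>x::'a. \<Prod>b\<in>Basis. f b (x \<bullet> b)) \<in> borel_measurable borel" by measurable
  have comp: "(\<Prod>b\<in>Basis. f b (?T x \<bullet> b)) = (\<Prod>b\<in>Basis. f b (x b))" for x
    by (intro prod.cong refl) (simp add: inner_sum_left inner_Basis if_distrib cong: if_cong)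
  have i1: "integrable (\<Pi>\<^sub>M b\<in>Basis. lborel) (\<lambda>x. \<Prod>b\<in>Basis. f b (x b))"
    by (rule product_integrable_prod) (auto intro: int)
  show "integrable lborel (\<lambda>x::'a. \<Prod>b\<in>Basis. f b (x \<bullet> b))"
    by (subst lborel_eq, subst integrable_distr_eq[OF Tm gm]) (simp add: comp i1)
  show "(\<integral>x. (\<Prod>b\<in>Basis. f b (x \<bullet> b)) \<partial>(lborel::'a measure)) = (\<Prod>b\<in>Basis. integral\<^sup>L lborel (f b))"
    by (subst lborel_eq, subst integral_distr[OF Tm gm]) (simp add: comp product_integral_prod int)
qed


lemma nn_integral_affine:
  fixes f :: "'a::euclidean_space \<Rightarrow> ennreal"
  assumes [measurable]: "f \<in> borel_measurable borel" and c: "c \<noteq> 0"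
  shows "(\<integral>\<^sup>+x. f x \<partial>lborel) = ennreal (\<bar>c\<bar>^DIM('a)) * (\<integral>\<^sup>+x. f (t + c *\<^sub>R x) \<partial>lborel)"
  by (subst lborel_affine[OF c, of t])
     (simp add: nn_integral_density nn_integral_distr nn_integral_cmult)

lemma lborel_integrable_affine:
  fixes f :: "'a::euclidean_space \<Rightarrow> 'b :: {banach, second_countable_topology}"
  assumes f: "integrable lborel f"
  shows "c \<noteq> 0 \<Longrightarrow> integrable lborel (\<lambda>x. f (t + c *\<^sub>R x))"
  using f f[THEN borel_measurable_integrable] unfolding integrable_iff_bounded
  by (subst (asm) nn_integral_affine[where c=c and t=t]) (auto simp: ennreal_mult_less_top)

lemma lborel_integrable_affine_iff:
  fixes f :: "'a::euclidean_space \<Rightarrow> 'b :: {banach, second_countable_topology}"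
  shows "c \<noteq> 0 \<Longrightarrow> integrable lborel (\<lambda>x. f (t + c *\<^sub>R x)) \<longleftrightarrow> integrable lborel f"
  using
    lborel_integrable_affine[of f c t]
    lborel_integrable_affine[of "\<lambda>x. f (t + c *\<^sub>R x)" "1/c" "-t/\<^sub>R c"]
  by (auto simp add: field_simps scaleR_add_right)

lemma lborel_integral_affine:
  fixes f :: "'a::euclidean_space \<Rightarrow> 'b :: {banach, second_countable_topology}" and c :: real
  assumes c: "c \<noteq> 0" shows "(\<integral>x. f x \<partial> lborel) = (\<bar>c\<bar>^DIM('a)) *\<^sub>R (\<integral>x. f (t + c *\<^sub>R x) \<partial>lborel)"
proof cases
  assume f[measurable]: "integrable lborel f" then show ?thesis
    using c f f[THEN borel_measurable_integrable] f[THEN lborel_integrable_affine, of c t]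
    by (subst lborel_affine[OF c, of t])
       (simp add: integral_density integral_distr)
next
  assume "\<not> integrable lborel f" with c show ?thesis
    by (simp add: lborel_integrable_affine_iff not_integrable_integral_eq)
qed

lemma gauss1_ft:
  fixes a z :: real assumes a: "0 < a"
  shows "integrable lborel (\<lambda>x. complex_of_real (exp (- a * x\<^sup>2)) * exp (- (\<i> * complex_of_real (z * x))))"
    and "(\<integral>x. complex_of_real (exp (- a * x\<^sup>2)) * exp (- (\<i> * complex_of_real (z * x))) \<partial>lborel)
          = complex_of_real (sqrt (pi / a) * exp (- z\<^sup>2 / (4 * a)))"
proof -
  define c where "c = 1 / sqrt (2 * a)"
  have c: "c > 0" using a by (simp add: c_def)
  have cc: "c\<^sup>2 = 1 / (2 * a)" using a by (simp add: c_def power_divide)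
  let ?f = "\<lambda>x. complex_of_real (exp (- a * x\<^sup>2)) * exp (- (\<i> * complex_of_real (z * x)))"
  have ch: "char std_normal_distribution t = (\<integral>y. std_normal_density y *\<^sub>R exp (\<i> * complex_of_real (t * y)) \<partial>lborel)" for t
    unfolding char_def by (subst integral_density) auto
  have intN: "integrable lborel (\<lambda>y. std_normal_density y *\<^sub>R exp (\<i> * complex_of_real (t * y)))" for t
  proof -
    have "integrable std_normal_distribution (\<lambda>y. exp (\<i> * complex_of_real (t * y)))"
      using real_dist_normal_dist prob_space_normal_density
      by (intro prob_space.integrable_iexp) auto
    then show ?thesis by (subst (asm) integrable_density) auto
  qed
  have eq: "?f (0 + c * y) = complex_of_real (sqrt (2*pi)) * (std_normal_density y *\<^sub>R exp (\<i> * complex_of_real ((- z * c) * y)))" for y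
  proof -
    have "a * (c * y)\<^sup>2 = y\<^sup>2 / 2" using a by (simp add: power_mult_distrib cc)
    then show ?thesis
      by (simp add: std_normal_density_def scaleR_conv_of_real mult_ac)
  qed
  have i2: "integrable lborel (\<lambda>y. ?f (0 + c * y))"
    unfolding eq by (intro integrable_mult_right intN)
  show "integrable lborel ?f"
    using i2 lborel_integrable_real_affine_iff[where c=c and t=0 and f="?f"] c by simp
  have "(\<integral>x. ?f x \<partial>lborel) = c *\<^sub>R (\<integral>y. ?f (0 + c * y) \<partial>lborel)"
    using lborel_integral_real_affine[where c=c and t=0 and f="?f"] c by simp
  also have "\<dots> = c *\<^sub>R (complex_of_real (sqrt (2*pi)) * char std_normal_distribution (- z * c))"
    by (simp only: eq ch integral_mult_right_zero)
  also have "\<dots> = complex_of_real (c * sqrt (2*pi) * exp (- (z * c)\<^sup>2 / 2))"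
    by (simp add: char_std_normal_distribution scaleR_conv_of_real)
  also have "c * sqrt (2*pi) = sqrt (pi / a)"
    using a by (simp add: c_def real_sqrt_divide real_sqrt_mult)
  also have "- (z * c)\<^sup>2 / 2 = - z\<^sup>2 / (4 * a)"
    using a by (simp add: power_mult_distrib cc)
  finally show "(\<integral>x. ?f x \<partial>lborel) = complex_of_real (sqrt (pi / a) * exp (- z\<^sup>2 / (4 * a)))" .
qed

lemma gaussN_ft:
  fixes a :: real and z :: "'a::euclidean_space" assumes a: "0 < a"
  shows "integrable lborel (\<lambda>x::'a. complex_of_real (exp (- a * (x \<bullet> x))) * exp (- (\<i> * complex_of_real (z \<bullet> x))))"
    and "(\<integral>x. complex_of_real (exp (- a * (x \<bullet> x))) * exp (- (\<i> * complex_of_real (z \<bullet> x))) \<partial>lborel)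
          = complex_of_real (sqrt (pi / a) ^ DIM('a) * exp (- (z \<bullet> z) / (4 * a)))"
proof -
  let ?f = "\<lambda>b t. complex_of_real (exp (- a * t\<^sup>2)) * exp (- (\<i> * complex_of_real ((z \<bullet> b) * t)))"
  have eq: "complex_of_real (exp (- a * (x \<bullet> x))) * exp (- (\<i> * complex_of_real (z \<bullet> x)))
      = (\<Prod>b\<in>Basis. ?f b (x \<bullet> b))" for x :: 'a
  proof -
    have "exp (- a * (x \<bullet> x)) = (\<Prod>b\<in>(Basis::'a set). exp (- a * (x \<bullet> b)\<^sup>2))"
      by (subst euclidean_inner) (simp add: sum_distrib_left exp_sum power2_eq_square flip: sum_negf)
    moreover have "exp (- (\<i> * complex_of_real (z \<bullet> x))) = (\<Prod>b\<in>(Basis::'a set). exp (- (\<i> * complex_of_real ((z \<bullet> b) * (x \<bullet> b)))))"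
      by (subst euclidean_inner) (simp add: sum_distrib_left exp_sum flip: sum_negf)
    ultimately show ?thesis by (simp add: prod.distrib)
  qed
  show "integrable lborel (\<lambda>x::'a. complex_of_real (exp (- a * (x \<bullet> x))) * exp (- (\<i> * complex_of_real (z \<bullet> x))))"
    unfolding eq by (rule lborel_prod_integral(1)) (rule gauss1_ft(1)[OF a])
  have "(\<integral>x. complex_of_real (exp (- a * (x \<bullet> x))) * exp (- (\<i> * complex_of_real (z \<bullet> x))) \<partial>lborel)
      = (\<Prod>b\<in>(Basis::'a set). complex_of_real (sqrt (pi / a) * exp (- (z \<bullet> b)\<^sup>2 / (4 * a))))"
  proof -
    have ib: "integrable lborel (?f b)" for b by (rule gauss1_ft(1)[OF a])
    show ?thesis unfolding eq by (simp only: lborel_prod_integral(2)[OF ib] gauss1_ft(2)[OF a])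
  qed
  also have "\<dots> = complex_of_real (sqrt (pi / a) ^ DIM('a) * exp (- (z \<bullet> z) / (4 * a)))"
    by (subst euclidean_inner[of z z]) (simp add: prod.distrib exp_sum power2_eq_square sum_divide_distrib flip: sum_negf)
  finally show "(\<integral>x. complex_of_real (exp (- a * (x \<bullet> x))) * exp (- (\<i> * complex_of_real (z \<bullet> x))) \<partial>lborel)
          = complex_of_real (sqrt (pi / a) ^ DIM('a) * exp (- (z \<bullet> z) / (4 * a)))" .
qed

lemma gaussN:
  fixes a :: real assumes a: "0 < a"
  shows "integrable lborel (\<lambda>x::'a::euclidean_space. exp (- a * (x \<bullet> x)))"
    and "(\<integral>x. exp (- a * (x \<bullet> x)) \<partial>(lborel::'a measure)) = sqrt (pi / a) ^ DIM('a)"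
    and "(\<integral>\<^sup>+x. ennreal (exp (- a * (x \<bullet> x))) \<partial>(lborel::'a measure)) = ennreal (sqrt (pi / a) ^ DIM('a))"
proof -
  have i: "integrable lborel (\<lambda>x::'a. complex_of_real (exp (- a * (x \<bullet> x))))"
    using gaussN_ft(1)[OF a, of 0] by simp
  then show i': "integrable lborel (\<lambda>x::'a::euclidean_space. exp (- a * (x \<bullet> x)))"
    by (simp add: complex_of_real_integrable_eq)
  have "complex_of_real (\<integral>x. exp (- a * (x \<bullet> x)) \<partial>(lborel::'a measure)) = complex_of_real (sqrt (pi / a) ^ DIM('a))"
    using gaussN_ft(2)[OF a, of 0] by simp
  then show e: "(\<integral>x. exp (- a * (x \<bullet> x)) \<partial>(lborel::'a measure)) = sqrt (pi / a) ^ DIM('a)"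
    by (simp only: of_real_eq_iff)
  show "(\<integral>\<^sup>+x. ennreal (exp (- a * (x \<bullet> x))) \<partial>(lborel::'a measure)) = ennreal (sqrt (pi / a) ^ DIM('a))"
    by (subst nn_integral_eq_integral[OF i']) (simp, simp only: e)
qed


definition ee :: "'a::euclidean_space \<Rightarrow> 'a \<Rightarrow> complex" where
  "ee z \<theta> = exp (- (\<i> * complex_of_real (z \<bullet> \<theta>)))"

lemma norm_ee[simp]: "norm (ee z \<theta>) = 1"
  by (simp add: ee_def)

lemma ee_add: "ee z (a + b) = ee z a * ee z b"
  by (simp add: ee_def inner_add_right distrib_left exp_add[symmetric] algebra_simps)

lemma ee_scale: "ee z (c *\<^sub>R a) = exp (- (\<i> * complex_of_real (c * (z \<bullet> a))))"
  by (simp add: ee_def)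

lemma continuous_ee[continuous_intros]: "continuous_on UNIV (\<lambda>\<theta>. ee z \<theta>)"
  unfolding ee_def by (intro continuous_intros)

lemma measurable_ee[measurable]: "(\<lambda>\<theta>. ee z \<theta>) \<in> borel_measurable borel"
  by (intro borel_measurable_continuous_onI continuous_ee)

definition decay :: "('a::euclidean_space \<Rightarrow> complex) \<Rightarrow> bool" where
  "decay f \<longleftrightarrow> continuous_on UNIV f \<and> (\<exists>C. \<forall>x. (1 + norm x)^(2*DIM('a)) * norm (f x) \<le> C)"

lemma integrable_inv_sq: "integrable lborel (\<lambda>t::real. inverse (1 + t\<^sup>2))"
  using integrable_inverse_1_plus_square by (simp add: set_integrable_def)

lemma weight_int: "integrable lborel (\<lambda>x::'a::euclidean_space. 1 / (1 + norm x)^(2*DIM('a)))"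
proof -
  let ?g = "\<lambda>x::'a. \<Prod>b\<in>Basis. inverse (1 + (x \<bullet> b)\<^sup>2)"
  have ig: "integrable lborel ?g"
    by (rule lborel_prod_integral(1)) (rule integrable_inv_sq)
  show ?thesis
  proof (rule Bochner_Integration.integrable_bound[OF ig])
    show "(\<lambda>x::'a. 1 / (1 + norm x)^(2*DIM('a))) \<in> borel_measurable lborel" by measurable
    show "AE x in lborel. norm (1 / (1 + norm x)^(2*DIM('a))) \<le> norm (?g x)"
    proof (rule AE_I2)
      fix x :: 'a
      have "(\<Prod>b\<in>(Basis::'a set). 1 + (x \<bullet> b)\<^sup>2) \<le> (\<Prod>b\<in>(Basis::'a set). (1 + norm x)\<^sup>2)"
      proof (rule prod_mono, safe)
        fix b :: 'a assume b: "b \<in> Basis"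
        have "\<bar>x \<bullet> b\<bar> \<le> norm x" using Basis_le_norm[OF b] .
        then have "(x \<bullet> b)\<^sup>2 \<le> (norm x)\<^sup>2" by (metis abs_le_square_iff abs_norm_cancel)
        then show "1 + (x \<bullet> b)\<^sup>2 \<le> (1 + norm x)\<^sup>2" unfolding power2_sum power_one using norm_ge_zero[of x] by linarith
      qed (auto intro: add_nonneg_nonneg)
      also have "\<dots> = (1 + norm x)^(2*DIM('a))" by (simp add: power_mult[symmetric] mult.commute)
      finally have le: "(\<Prod>b\<in>(Basis::'a set). 1 + (x \<bullet> b)\<^sup>2) \<le> (1 + norm x)^(2*DIM('a))" .
      have pos: "0 < (\<Prod>b\<in>(Basis::'a set). 1 + (x \<bullet> b)\<^sup>2)" by (intro prod_pos) (auto intro: add_pos_nonneg)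
      have "1 / (1 + norm x)^(2*DIM('a)) \<le> 1 / (\<Prod>b\<in>(Basis::'a set). 1 + (x \<bullet> b)\<^sup>2)"
        using le pos by (intro divide_left_mono) auto
      also have "\<dots> = ?g x" by (simp add: prod_inversef[symmetric] divide_inverse)
      finally show "norm (1 / (1 + norm x)^(2*DIM('a))) \<le> norm (?g x)"
        using pos by (simp add: prod_inversef[symmetric] divide_inverse abs_mult)
    qed
  qed
qed

lemma decay_bound:
  assumes "decay (f::'a::euclidean_space \<Rightarrow> complex)"
  obtains C where "C \<ge> 0" "\<And>x. norm (f x) \<le> C * (1 / (1 + norm x)^(2*DIM('a)))"
proof -
  obtain C where C: "\<And>x. (1 + norm x)^(2*DIM('a)) * norm (f x) \<le> C" using assms by (auto simp: decay_def)
  have "0 \<le> C" using C[of 0] by (smt (verit) mult_nonneg_nonneg norm_ge_zero zero_le_power)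
  moreover have "norm (f x) \<le> C * (1 / (1 + norm x)^(2*DIM('a)))" for x
  proof -
    have p: "0 < (1 + norm x)^(2*DIM('a))" by (simp add: add_pos_nonneg)
    show ?thesis using C[of x] p by (simp add: field_simps mult.commute)
  qed
  ultimately show ?thesis using that by blast
qed

lemma decay_measurable: "decay f \<Longrightarrow> f \<in> borel_measurable borel"
  by (auto simp: decay_def intro: borel_measurable_continuous_onI)

lemma decay_integrable:
  assumes "decay (f::'a::euclidean_space \<Rightarrow> complex)"
  shows "integrable lborel f"
proof -
  obtain C where C: "C \<ge> 0" "\<And>x. norm (f x) \<le> C * (1 / (1 + norm x)^(2*DIM('a)))"
    using decay_bound[OF assms] by blast
  show ?thesis
    by (rule Bochner_Integration.integrable_bound[OF integrable_mult_right[OF weight_int, of C]])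
       (use C decay_measurable[OF assms] in auto)
qed

lemma decay_ee_integrable:
  assumes "decay (f::'a::euclidean_space \<Rightarrow> complex)"
  shows "integrable lborel (\<lambda>\<theta>. ee z \<theta> * f \<theta>)"
  by (rule Bochner_Integration.integrable_bound[OF decay_integrable[OF assms]])
     (use decay_measurable[OF assms] in \<open>auto simp: norm_mult\<close>)


lemma cmod_1_plus_of_nat[simp]: "cmod (1 + complex_of_nat k) = 1 + real k"
  using norm_of_nat[of "Suc k", where 'a=complex] by (simp only: of_nat_Suc)

lemma vd_seq:
  fixes g :: "real \<Rightarrow> complex"
  assumes "(g has_vector_derivative D) (at 0)"
  shows "(\<lambda>k. of_real (real (Suc k)) * (g (1 / real (Suc k)) - g 0)) \<longlonglongrightarrow> D"
proof -
  let ?h = "\<lambda>k::nat. 1 / real (Suc k)"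
  have h0: "?h \<longlonglongrightarrow> 0"
    using LIMSEQ_Suc[OF lim_1_over_n[where 'a=real]] by simp
  have hlim: "filterlim ?h (at 0) sequentially"
    by (rule filterlim_atI[OF h0]) auto
  have "(g has_derivative (\<lambda>t. t *\<^sub>R D)) (at 0)"
    using assms by (simp add: has_vector_derivative_def)
  then have "((\<lambda>y. norm ((g y - g 0) - (y - 0) *\<^sub>R D) / norm (y - 0)) \<longlongrightarrow> 0) (at 0)"
    by (simp add: has_derivative_iff_norm)
  from filterlim_compose[OF this hlim]
  have L: "(\<lambda>k. norm ((g (?h k) - g 0) - (?h k - 0) *\<^sub>R D) / norm (?h k - 0)) \<longlonglongrightarrow> 0" .
  have eq: "norm ((g (?h k) - g 0) - (?h k - 0) *\<^sub>R D) / norm (?h k - 0)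
      = norm (of_real (real (Suc k)) * (g (?h k) - g 0) - D)" for k
  proof -
    have "of_real (real (Suc k)) * (g (?h k) - g 0) - D = of_real (real (Suc k)) * ((g (?h k) - g 0) - (?h k - 0) *\<^sub>R D)"
    proof -
      have nz: "(1 + complex_of_nat k) \<noteq> 0" by (metis of_nat_Suc of_nat_eq_0_iff Suc_neq_Zero add.commute)
      show ?thesis by (simp add: algebra_simps scaleR_conv_of_real field_simps nz)
    qed
    moreover have nk: "cmod (1 + complex_of_nat k) = 1 + real k"
      using norm_of_nat[of "Suc k", where 'a=complex] by (simp only: of_nat_Suc)
    ultimately show ?thesis by (simp add: norm_mult divide_inverse mult.commute nk)
  qed
  show ?thesis
    using L unfolding eq by (simp add: tendsto_norm_zero_iff LIM_zero_cancel)
qed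
lemma iexp_lin_deriv: "((\<lambda>t. exp (\<i> * complex_of_real (t * c))) has_vector_derivative \<i> * complex_of_real c) (at 0)"
proof -
  have 1: "((\<lambda>t. t * c) has_vector_derivative c) (at 0)"
    unfolding has_real_derivative_iff_has_vector_derivative[symmetric] by (auto intro!: derivative_eq_intros)
  have 2: "(iexp has_vector_derivative \<i> * iexp ((\<lambda>t. t * c) 0)) (at ((\<lambda>t. t * c) 0))"
    by (rule has_vector_derivative_iexp)
  from vector_diff_chain_at[OF 1 2] show ?thesis by (simp add: o_def scaleR_conv_of_real mult.commute)
qed
lemma ibp:
  fixes f f' :: "'a::euclidean_space \<Rightarrow> complex"
  assumes df: "decay f" and df': "decay f'" and e: "norm e \<le> 1"
    and der: "\<And>x. ((\<lambda>t. f (x + t *\<^sub>R e)) has_vector_derivative f' x) (at 0)"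
  shows "(\<integral>\<theta>. ee z \<theta> * f' \<theta> \<partial>lborel) = \<i> * complex_of_real (z \<bullet> e) * (\<integral>\<theta>. ee z \<theta> * f \<theta> \<partial>lborel)"
proof -
  let ?h = "\<lambda>k::nat. 1 / real (Suc k)"
  let ?s = "\<lambda>k \<theta>. ee z \<theta> * (of_real (real (Suc k)) * (f (\<theta> + ?h k *\<^sub>R e) - f \<theta>))"
  let ?I = "\<integral>\<theta>. ee z \<theta> * f \<theta> \<partial>lborel"
  have fm[measurable]: "f \<in> borel_measurable borel" using decay_measurable[OF df] .
  have fm'[measurable]: "f' \<in> borel_measurable borel" using decay_measurable[OF df'] .
  have derat: "((\<lambda>t. f (x + t *\<^sub>R e)) has_vector_derivative f' (x + t0 *\<^sub>R e)) (at t0)" for x t0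
  proof -
    have 1: "((\<lambda>t. t - t0) has_vector_derivative 1) (at t0)" by (auto intro!: derivative_eq_intros)
    have 2: "((\<lambda>s. f ((x + t0 *\<^sub>R e) + s *\<^sub>R e)) has_vector_derivative f' (x + t0 *\<^sub>R e)) (at ((\<lambda>t. t - t0) t0))"
      using der by simp
    have 3: "(x + t0 *\<^sub>R e) + (t - t0) *\<^sub>R e = x + t *\<^sub>R e" for t by (simp add: algebra_simps)
    from vector_diff_chain_at[OF 1 2] show ?thesis by (simp add: o_def 3)
  qed
  have ief: "integrable lborel (\<lambda>\<theta>. ee z \<theta> * f \<theta>)" by (rule decay_ee_integrable[OF df])
  have shift_eq: "ee z (c *\<^sub>R e + \<theta>) * f (c *\<^sub>R e + \<theta>) = exp (- (\<i> * complex_of_real (c * (z \<bullet> e)))) * (ee z \<theta> * f (\<theta> + c *\<^sub>R e))" for c \<theta>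
    by (simp add: ee_add ee_scale add.commute mult_ac)
  have int_shift: "integrable lborel (\<lambda>\<theta>. ee z \<theta> * f (\<theta> + c *\<^sub>R e))" for c
  proof -
    have "integrable lborel (\<lambda>\<theta>. ee z (c *\<^sub>R e + 1 *\<^sub>R \<theta>) * f (c *\<^sub>R e + 1 *\<^sub>R \<theta>))"
      using lborel_integrable_affine[OF ief, of 1 "c *\<^sub>R e"] by simp
    then have "integrable lborel (\<lambda>\<theta>. exp (- (\<i> * complex_of_real (c * (z \<bullet> e)))) * (ee z \<theta> * f (\<theta> + c *\<^sub>R e)))"
      by (simp add: shift_eq)
    then have "integrable lborel (\<lambda>\<theta>. exp (\<i> * complex_of_real (c * (z \<bullet> e))) * (exp (- (\<i> * complex_of_real (c * (z \<bullet> e)))) * (ee z \<theta> * f (\<theta> + c *\<^sub>R e))))"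
      by (rule integrable_mult_right)
    then show ?thesis by (simp add: mult.assoc[symmetric] exp_add[symmetric])
  qed
  have shift: "(\<integral>\<theta>. ee z \<theta> * f (\<theta> + c *\<^sub>R e) \<partial>lborel) = exp (\<i> * complex_of_real (c * (z \<bullet> e))) * ?I" for c
  proof -
    have "?I = (\<integral>\<theta>. ee z (c *\<^sub>R e + 1 *\<^sub>R \<theta>) * f (c *\<^sub>R e + 1 *\<^sub>R \<theta>) \<partial>lborel)"
      using lborel_integral_affine[where c=1 and t="c *\<^sub>R e" and f="\<lambda>\<theta>. ee z \<theta> * f \<theta>"] by simp
    also have "\<dots> = (\<integral>\<theta>. exp (- (\<i> * complex_of_real (c * (z \<bullet> e)))) * (ee z \<theta> * f (\<theta> + c *\<^sub>R e)) \<partial>lborel)"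
      by (simp add: shift_eq)
    also have "\<dots> = exp (- (\<i> * complex_of_real (c * (z \<bullet> e)))) * (\<integral>\<theta>. ee z \<theta> * f (\<theta> + c *\<^sub>R e) \<partial>lborel)"
      by (rule integral_mult_right_zero)
    finally have "exp (\<i> * complex_of_real (c * (z \<bullet> e))) * ?I = exp (\<i> * complex_of_real (c * (z \<bullet> e))) * exp (- (\<i> * complex_of_real (c * (z \<bullet> e)))) * (\<integral>\<theta>. ee z \<theta> * f (\<theta> + c *\<^sub>R e) \<partial>lborel)"
      by simp
    then show ?thesis by (simp add: exp_add[symmetric])
  qed
  have int_s: "(\<integral>\<theta>. ?s k \<theta> \<partial>lborel) = of_real (real (Suc k)) * (exp (\<i> * complex_of_real (?h k * (z \<bullet> e))) - 1) * ?I" for k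
  proof -
    have "(\<integral>\<theta>. ?s k \<theta> \<partial>lborel) = (\<integral>\<theta>. of_real (real (Suc k)) * (ee z \<theta> * f (\<theta> + ?h k *\<^sub>R e) - ee z \<theta> * f \<theta>) \<partial>lborel)"
      by (simp add: algebra_simps)
    also have "\<dots> = of_real (real (Suc k)) * ((\<integral>\<theta>. ee z \<theta> * f (\<theta> + ?h k *\<^sub>R e) \<partial>lborel) - ?I)"
      by (simp add: integral_mult_right_zero Bochner_Integration.integral_diff[OF int_shift ief])
    also have "\<dots> = of_real (real (Suc k)) * (exp (\<i> * complex_of_real (?h k * (z \<bullet> e))) - 1) * ?I"
      by (simp add: shift algebra_simps)
    finally show ?thesis .
  qed
  have lim1: "(\<lambda>k. \<integral>\<theta>. ?s k \<theta> \<partial>lborel) \<longlonglongrightarrow> \<i> * complex_of_real (z \<bullet> e) * ?I"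
  proof -
    have d: "((\<lambda>t. exp (\<i> * complex_of_real (t * (z \<bullet> e)))) has_vector_derivative \<i> * complex_of_real (z \<bullet> e)) (at 0)"
      by (rule iexp_lin_deriv)
    from tendsto_mult_right[OF vd_seq[OF d], of ?I] show ?thesis
      unfolding int_s by (simp add: mult.assoc)
  qed
  obtain C where C: "C \<ge> 0" "\<And>x. norm (f' x) \<le> C * (1 / (1 + norm x)^(2*DIM('a)))"
    using decay_bound[OF df'] by blast
  let ?w = "\<lambda>\<theta>::'a. (C * 2^(2*DIM('a))) * (1 / (1 + norm \<theta>)^(2*DIM('a)))"
  have bound: "norm (?s k \<theta>) \<le> ?w \<theta>" for k \<theta>
  proof -
    let ?g = "\<lambda>t. f (\<theta> + t *\<^sub>R e)"
    have hpos: "0 < ?h k" by simp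
    have cont: "continuous_on {0..?h k} ?g"
      by (intro continuous_at_imp_continuous_on ballI has_vector_derivative_continuous[OF derat])
    have dd: "(?g has_derivative (\<lambda>s. s *\<^sub>R f' (\<theta> + t *\<^sub>R e))) (at t)" for t
      using derat[of \<theta> t] unfolding has_vector_derivative_def .
    obtain \<tau> where \<tau>: "\<tau> \<in> {0<..<?h k}" "norm (?g (?h k) - ?g 0) \<le> norm ((?h k - 0) *\<^sub>R f' (\<theta> + \<tau> *\<^sub>R e))"
      using mvt_general[OF hpos cont dd] by blast
    have h1: "?h k \<le> 1" by (simp add: field_simps)
    have "\<tau> < ?h k" using \<tau>(1) by simp
    then have tl: "\<tau> \<le> 1" using h1 by linarith
    let ?y = "\<theta> + \<tau> *\<^sub>R e"
    have a: "norm \<theta> \<le> norm ?y + \<tau> * norm e"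
      using norm_triangle_ineq4[of ?y "\<tau> *\<^sub>R e"] \<tau>(1) by simp
    have b: "\<tau> * norm e \<le> 1" using tl e \<tau>(1) by (simp add: mult_le_one)
    have "1 + norm \<theta> \<le> 2 * (1 + norm ?y)" using a b norm_ge_zero[of ?y] by (smt (verit))
    then have "(1 + norm \<theta>)^(2*DIM('a)) \<le> (2 * (1 + norm ?y))^(2*DIM('a))"
      by (rule power_mono) simp
    then have pw: "(1 + norm \<theta>)^(2*DIM('a)) \<le> 2^(2*DIM('a)) * (1 + norm ?y)^(2*DIM('a))"
      by (simp only: power_mult_distrib)
    have p1: "0 < (1 + norm \<theta>)^(2*DIM('a))" "0 < (1 + norm ?y)^(2*DIM('a))" by (simp_all add: add_pos_nonneg)
    have "1 / (1 + norm ?y)^(2*DIM('a)) \<le> 2^(2*DIM('a)) * (1 / (1 + norm \<theta>)^(2*DIM('a)))"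
      using pw p1 by (simp add: field_simps)
    then have fy: "norm (f' ?y) \<le> C * (2^(2*DIM('a)) * (1 / (1 + norm \<theta>)^(2*DIM('a))))"
      using C(2)[of ?y] C(1) by (meson mult_left_mono order_trans)
    have "norm (?s k \<theta>) = real (Suc k) * norm (?g (?h k) - ?g 0)"
      by (simp add: norm_mult)
    also have "\<dots> \<le> real (Suc k) * norm ((?h k - 0) *\<^sub>R f' ?y)"
      using \<tau>(2) by (intro mult_left_mono) auto
    also have "\<dots> = norm (f' ?y)" by simp
    also have "\<dots> \<le> ?w \<theta>" using fy by (simp add: mult_ac)
    finally show ?thesis .
  qed
  have lim2: "(\<lambda>k. \<integral>\<theta>. ?s k \<theta> \<partial>lborel) \<longlonglongrightarrow> (\<integral>\<theta>. ee z \<theta> * f' \<theta> \<partial>lborel)"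
  proof (rule integral_dominated_convergence[where w="?w"])
    show "(\<lambda>\<theta>. ee z \<theta> * f' \<theta>) \<in> borel_measurable lborel" by measurable
    show "?s k \<in> borel_measurable lborel" for k by measurable
    show "integrable lborel ?w" by (rule integrable_mult_right) (rule weight_int)
    show "AE \<theta> in lborel. (\<lambda>k. ?s k \<theta>) \<longlonglongrightarrow> ee z \<theta> * f' \<theta>"
    proof (rule AE_I2)
      fix \<theta>
      show "(\<lambda>k. ?s k \<theta>) \<longlonglongrightarrow> ee z \<theta> * f' \<theta>"
        using tendsto_mult_left[OF vd_seq[OF der[of \<theta>]], of "ee z \<theta>"] by simp
    qed
    show "AE \<theta> in lborel. norm (?s k \<theta>) \<le> ?w \<theta>" for k using bound by simp
  qed
  show ?thesis using LIMSEQ_unique[OF lim2 lim1] .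
qed



lemma Basis_vec_real: "(Basis :: (real^'n) set) = range (\<lambda>i. axis i 1)"
  by (auto simp: Basis_vec_def)

lemma prod_Basis_vec: "(\<Prod>b\<in>(Basis::(real^'n) set). g (x \<bullet> b)) = (\<Prod>j\<in>UNIV. g (x $ j))"
  by (simp add: Basis_vec_real prod.reindex inj_on_def axis_eq_axis inner_axis)

lemma schwartz_decay:
  assumes "schwartz (f :: real^'n \<Rightarrow> complex)"
  shows "decay (iter_partial is f)"
  using assms unfolding schwartz_def decay_def by auto

lemma schwartz_deriv:
  assumes "schwartz (f :: real^'n \<Rightarrow> complex)"
  shows "((\<lambda>t. iter_partial is f (x + t *\<^sub>R axis j 1)) has_vector_derivative iter_partial (j # is) f x) (at 0)"
proof -
  have "(\<lambda>t. iter_partial is f (x + t *\<^sub>R axis j 1)) differentiable (at 0)"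
    using assms unfolding schwartz_def by blast
  then show ?thesis
    by (simp add: vector_derivative_works partial_deriv_def)
qed

lemma fourier_eq:
  assumes "decay (f :: real^'n \<Rightarrow> complex)"
  shows "fourier f z = complex_of_real ((2*pi) powr (- real CARD('n)/2)) * (\<integral>\<theta>. ee z \<theta> * f \<theta> \<partial>lborel)"
  unfolding fourier_def
  using integral_lborel[OF decay_ee_integrable[OF assms, of z]] by (simp add: ee_def)

lemma ft_iter:
  assumes sf: "schwartz (f :: real^'n \<Rightarrow> complex)"
  shows "(\<integral>\<theta>. ee z \<theta> * iter_partial is f \<theta> \<partial>lborel)
        = prod_list (map (\<lambda>k. \<i> * complex_of_real (z $ k)) is) * (\<integral>\<theta>. ee z \<theta> * f \<theta> \<partial>lborel)"
proof (induction "is")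
  case Nil
  then show ?case by simp
next
  case (Cons j "is")
  have "(\<integral>\<theta>. ee z \<theta> * iter_partial (j # is) f \<theta> \<partial>lborel)
      = \<i> * complex_of_real (z \<bullet> axis j 1) * (\<integral>\<theta>. ee z \<theta> * iter_partial is f \<theta> \<partial>lborel)"
    by (rule ibp[OF schwartz_decay[OF sf] schwartz_decay[OF sf]]) (use schwartz_deriv[OF sf, of "is"] in simp_all)
  also have "\<dots> = \<i> * complex_of_real (z $ j) * (\<integral>\<theta>. ee z \<theta> * iter_partial is f \<theta> \<partial>lborel)"
    by (simp add: inner_axis)
  finally show ?case using Cons.IH by (simp add: mult_ac)
qed

lemma ft_bound:
  assumes sf: "schwartz (f :: real^'n \<Rightarrow> complex)"
  shows "\<exists>M. \<forall>z. norm (\<integral>\<theta>. ee z \<theta> * f \<theta> \<partial>lborel) \<le> M * (\<Prod>j\<in>UNIV. inverse (1 + (z $ j)\<^sup>2))"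
proof -
  define L where "L S = (SOME xs. set xs = S \<and> distinct xs)" for S :: "'n set"
  have L: "set (L S) = S" "distinct (L S)" for S
    using someI_ex[OF finite_distinct_list[OF finite[of S]]] by (auto simp: L_def)
  define M where "M = (\<Sum>S\<in>Pow (UNIV::'n set). \<integral>\<theta>. norm (iter_partial (L S @ L S) f \<theta>) \<partial>lborel)"
  let ?J = "\<lambda>z. \<integral>\<theta>. ee z \<theta> * f \<theta> \<partial>lborel"
  have key: "(\<Prod>j\<in>S. (z $ j)\<^sup>2) * norm (?J z) \<le> (\<integral>\<theta>. norm (iter_partial (L S @ L S) f \<theta>) \<partial>lborel)" for S z
  proof -
    let ?g = "\<lambda>k. \<i> * complex_of_real (z $ k)"
    have "norm (prod_list (map ?g (L S @ L S))) = (\<Prod>j\<in>S. (z $ j)\<^sup>2)"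
    proof -
      have "prod_list (map ?g (L S @ L S)) = (prod ?g S)\<^sup>2"
        using prod.distinct_set_conv_list[OF L(2), of ?g] L(1) by (simp add: power2_eq_square)
      moreover have "norm (prod ?g S) = (\<Prod>j\<in>S. \<bar>z $ j\<bar>)"
        by (simp add: prod_norm[symmetric] norm_mult)
      ultimately have "norm (prod_list (map ?g (L S @ L S))) = (\<Prod>j\<in>S. \<bar>z $ j\<bar>)\<^sup>2"
        by (simp add: norm_power)
      then show ?thesis by (simp add: prod_power_distrib)
    qed
    then have "(\<Prod>j\<in>S. (z $ j)\<^sup>2) * norm (?J z) = norm (\<integral>\<theta>. ee z \<theta> * iter_partial (L S @ L S) f \<theta> \<partial>lborel)"
      by (simp add: ft_iter[OF sf] norm_mult)
    also have "\<dots> \<le> (\<integral>\<theta>. norm (ee z \<theta> * iter_partial (L S @ L S) f \<theta>) \<partial>lborel)"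
      by (rule integral_norm_bound)
    also have "\<dots> = (\<integral>\<theta>. norm (iter_partial (L S @ L S) f \<theta>) \<partial>lborel)"
      by (simp add: norm_mult)
    finally show ?thesis .
  qed
  have "norm (?J z) \<le> M * (\<Prod>j\<in>UNIV. inverse (1 + (z $ j)\<^sup>2))" for z
  proof -
    have "(\<Prod>j\<in>UNIV. 1 + (z $ j)\<^sup>2) = (\<Sum>S\<in>Pow (UNIV::'n set). (\<Prod>j\<in>S. (z $ j)\<^sup>2) * (\<Prod>j\<in>UNIV - S. 1))"
      using prod_add[of "UNIV::'n set" "\<lambda>j. (z $ j)\<^sup>2" "\<lambda>_. 1"] by (simp add: add.commute)
    then have "(\<Prod>j\<in>UNIV. 1 + (z $ j)\<^sup>2) * norm (?J z) = (\<Sum>S\<in>Pow (UNIV::'n set). (\<Prod>j\<in>S. (z $ j)\<^sup>2) * norm (?J z))"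
      by (simp add: sum_distrib_right)
    also have "\<dots> \<le> M" unfolding M_def by (rule sum_mono) (rule key)
    finally have le: "(\<Prod>j\<in>UNIV. 1 + (z $ j)\<^sup>2) * norm (?J z) \<le> M" .
    have pos: "0 < (\<Prod>j\<in>UNIV. 1 + (z $ j)\<^sup>2)" by (intro prod_pos) (auto intro: add_pos_nonneg)
    have "norm (?J z) \<le> M / (\<Prod>j\<in>UNIV. 1 + (z $ j)\<^sup>2)"
      using le pos by (simp add: field_simps)
    then show ?thesis by (simp add: divide_inverse prod_inversef[symmetric])
  qed
  then show ?thesis by blast
qed


abbreviation kap :: "'n::finite itself \<Rightarrow> complex" where
  "kap _ \<equiv> complex_of_real ((2*pi) powr (- real CARD('n)/2))"

lemma ee_prod_measurable[measurable]:
  "(\<lambda>p::('a::euclidean_space \<times> 'a). ee (fst p) (snd p)) \<in> borel_measurable (lborel \<Otimes>\<^sub>M lborel)"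
  unfolding lborel_prod measurable_lborel1 measurable_lborel2
  by (intro borel_measurable_continuous_onI) (simp add: ee_def case_prod_beta continuous_intros)

lemma J_measurable:
  assumes "decay (f :: 'a::euclidean_space \<Rightarrow> complex)"
  shows "(\<lambda>z. \<integral>\<theta>. ee z \<theta> * f \<theta> \<partial>lborel) \<in> borel_measurable borel"
proof -
  have [measurable]: "f \<in> borel_measurable borel" using decay_measurable[OF assms] .
  have "(\<lambda>p::('a \<times> 'a). ee (fst p) (snd p) * f (snd p)) \<in> borel_measurable (lborel \<Otimes>\<^sub>M lborel)" by measurable
  then have "case_prod (\<lambda>z \<theta>. ee z \<theta> * f \<theta>) \<in> borel_measurable (lborel \<Otimes>\<^sub>M (lborel::'a measure))"
    by (simp add: case_prod_beta')
  from lborel.borel_measurable_lebesgue_integral[OF this] show ?thesis by simp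
qed

lemma F_integrable:
  assumes sf: "schwartz (\<Psi> :: real^'n \<Rightarrow> complex)"
  shows "integrable lborel (fourier \<Psi>)"
proof -
  obtain M where M: "\<And>z. norm (\<integral>\<theta>. ee z \<theta> * \<Psi> \<theta> \<partial>lborel) \<le> M * (\<Prod>j\<in>UNIV. inverse (1 + (z $ j)\<^sup>2))"
    using ft_bound[OF sf] by blast
  have d: "decay \<Psi>" using schwartz_decay[OF sf, of "[]"] by simp
  have feq: "fourier \<Psi> = (\<lambda>z. kap TYPE('n) * (\<integral>\<theta>. ee z \<theta> * \<Psi> \<theta> \<partial>lborel))"
    using fourier_eq[OF d] by (intro ext) simp
  have iw: "integrable lborel (\<lambda>z::real^'n. \<Prod>b\<in>Basis. inverse (1 + (z \<bullet> b)\<^sup>2))"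
    by (rule lborel_prod_integral(1)) (rule integrable_inv_sq)
  have iw2: "integrable lborel (\<lambda>z::real^'n. M * (\<Prod>j\<in>UNIV. inverse (1 + (z $ j)\<^sup>2)))"
  proof -
    have eqf: "(\<lambda>z::real^'n. \<Prod>b\<in>Basis. inverse (1 + (z \<bullet> b)\<^sup>2)) = (\<lambda>z. \<Prod>j\<in>UNIV. inverse (1 + (z $ j)\<^sup>2))"
      by (rule ext) (rule prod_Basis_vec)
    show ?thesis using integrable_mult_right[OF iw[unfolded eqf], of M] .
  qed
  have "integrable lborel (\<lambda>z. \<integral>\<theta>. ee z \<theta> * \<Psi> \<theta> \<partial>lborel)"
    by (rule Bochner_Integration.integrable_bound[OF iw2]) (use J_measurable[OF d] M in \<open>auto intro: order_trans[OF _ abs_ge_self]\<close>)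
  then show ?thesis unfolding feq by (rule integrable_mult_right)
qed

definition Phi :: "(real^'n::finite \<Rightarrow> complex) \<Rightarrow> real \<Rightarrow> complex" where
  "Phi \<Psi> s = (\<integral>z. complex_of_real (exp (- s * (z \<bullet> z))) * fourier \<Psi> z \<partial>lborel)"

lemma Phi_cont:
  assumes sf: "schwartz (\<Psi> :: real^'n \<Rightarrow> complex)"
    and s: "\<And>k. 0 \<le> s k" "s \<longlonglongrightarrow> 0"
  shows "(\<lambda>k. Phi \<Psi> (s k)) \<longlonglongrightarrow> Phi \<Psi> 0"
  unfolding Phi_def
proof (rule integral_dominated_convergence[where w="\<lambda>z. norm (fourier \<Psi> z)"])
  have [measurable]: "fourier \<Psi> \<in> borel_measurable borel"
    using F_integrable[OF sf] by (simp add: borel_measurable_integrable)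
  show "(\<lambda>z. complex_of_real (exp (- 0 * (z \<bullet> z))) * fourier \<Psi> z) \<in> borel_measurable lborel" by measurable
  show "(\<lambda>z. complex_of_real (exp (- s k * (z \<bullet> z))) * fourier \<Psi> z) \<in> borel_measurable lborel" for k by measurable
  show "integrable lborel (\<lambda>z. norm (fourier \<Psi> z))" using F_integrable[OF sf] by (rule integrable_norm)
  show "AE z in lborel. (\<lambda>k. complex_of_real (exp (- s k * (z \<bullet> z))) * fourier \<Psi> z) \<longlonglongrightarrow> complex_of_real (exp (- 0 * (z \<bullet> z))) * fourier \<Psi> z"
    using s(2) by (intro AE_I2 tendsto_intros) 
  show "AE z in lborel. norm (complex_of_real (exp (- s k * (z \<bullet> z))) * fourier \<Psi> z) \<le> norm (fourier \<Psi> z)" for k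
  proof (rule AE_I2)
    fix z :: "real^'n"
    have "exp (- s k * (z \<bullet> z)) \<le> 1" using s(1)[of k] by (simp add: mult_nonneg_nonneg)
    then show "norm (complex_of_real (exp (- s k * (z \<bullet> z))) * fourier \<Psi> z) \<le> norm (fourier \<Psi> z)"
      by (simp add: norm_mult mult_left_le_one_le)
  qed
qed


lemma ee_comm: "ee z \<theta> = exp (- (\<i> * complex_of_real (\<theta> \<bullet> z)))"
  by (simp add: ee_def inner_commute)

lemma Phi_formula:
  assumes sf: "schwartz (\<Psi> :: real^'n \<Rightarrow> complex)" and s: "0 < s"
  shows "Phi \<Psi> s = kap TYPE('n) * complex_of_real ((2 * sqrt pi)^CARD('n))
           * (\<integral>\<eta>. complex_of_real (exp (- (\<eta> \<bullet> \<eta>))) * \<Psi> ((2 * sqrt s) *\<^sub>R \<eta>) \<partial>lborel)"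
proof -
  have d: "decay \<Psi>" using schwartz_decay[OF sf, of "[]"] by simp
  have [measurable]: "\<Psi> \<in> borel_measurable borel" using decay_measurable[OF d] .
  let ?J = "\<lambda>z. \<integral>\<theta>. ee z \<theta> * \<Psi> \<theta> \<partial>lborel"
  let ?G = "\<lambda>z::real^'n. complex_of_real (exp (- s * (z \<bullet> z)))"
  let ?F = "\<lambda>z \<theta>. ?G z * (ee z \<theta> * \<Psi> \<theta>)"
  have fe: "fourier \<Psi> z = kap TYPE('n) * ?J z" for z using fourier_eq[OF d] by simp
  have step1: "Phi \<Psi> s = kap TYPE('n) * (\<integral>z. ?G z * ?J z \<partial>lborel)"
  proof -
    have r: "?G z * (kap TYPE('n) * ?J z) = kap TYPE('n) * (?G z * ?J z)" for z by (simp only: mult_ac)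
    show ?thesis unfolding Phi_def fe by (simp only: r integral_mult_right_zero)
  qed
  have step2: "(\<integral>z. ?G z * ?J z \<partial>lborel) = (\<integral>z. (\<integral>\<theta>. ?F z \<theta> \<partial>lborel) \<partial>lborel)"
    by (simp add: integral_mult_right_zero)
  have intF: "integrable (lborel \<Otimes>\<^sub>M lborel) (case_prod ?F)"
  proof (rule lborel_pair.Fubini_integrable)
    show "case_prod ?F \<in> borel_measurable (lborel \<Otimes>\<^sub>M lborel)"
      unfolding case_prod_beta by measurable
    have "(\<lambda>z. \<integral>\<theta>. norm (case_prod ?F (z, \<theta>)) \<partial>lborel) = (\<lambda>z. exp (- s * (z \<bullet> z)) * (\<integral>\<theta>. norm (\<Psi> \<theta>) \<partial>lborel))"
      by (simp add: norm_mult integral_mult_right_zero)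
    moreover have "integrable lborel (\<lambda>z::real^'n. exp (- s * (z \<bullet> z)) * (\<integral>\<theta>. norm (\<Psi> \<theta>) \<partial>lborel))"
      by (intro integrable_mult_left gaussN(1)[OF s])
    ultimately show "integrable lborel (\<lambda>z. \<integral>\<theta>. norm (case_prod ?F (z, \<theta>)) \<partial>lborel)" by simp
    show "AE z in lborel. integrable lborel (\<lambda>\<theta>. case_prod ?F (z, \<theta>))"
      by (intro AE_I2) (simp add: integrable_mult_right decay_ee_integrable[OF d])
  qed
  have step3: "(\<integral>z. (\<integral>\<theta>. ?F z \<theta> \<partial>lborel) \<partial>lborel) = (\<integral>\<theta>. (\<integral>z. ?F z \<theta> \<partial>lborel) \<partial>lborel)"
    using lborel_pair.Fubini_integral[OF intF] by simp
  have inner: "(\<integral>z. ?F z \<theta> \<partial>lborel) = complex_of_real (sqrt (pi / s) ^ CARD('n) * exp (- (\<theta> \<bullet> \<theta>) / (4 * s))) * \<Psi> \<theta>" for \<theta>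
  proof -
    have "(\<integral>z. ?F z \<theta> \<partial>lborel) = (\<integral>z. ?G z * exp (- (\<i> * complex_of_real (\<theta> \<bullet> z))) \<partial>lborel) * \<Psi> \<theta>"
      by (simp add: integral_mult_left_zero[symmetric] ee_comm mult_ac)
    also have "\<dots> = complex_of_real (sqrt (pi / s) ^ CARD('n) * exp (- (\<theta> \<bullet> \<theta>) / (4 * s))) * \<Psi> \<theta>"
      using gaussN_ft(2)[OF s, of \<theta>] by simp
    finally show ?thesis .
  qed
  define c where "c = 2 * sqrt s"
  have c: "c > 0" using s by (simp add: c_def)
  have step4: "(\<integral>\<theta>. complex_of_real (sqrt (pi / s) ^ CARD('n) * exp (- (\<theta> \<bullet> \<theta>) / (4 * s))) * \<Psi> \<theta> \<partial>lborel)
      = complex_of_real ((2 * sqrt pi)^CARD('n)) * (\<integral>\<eta>. complex_of_real (exp (- (\<eta> \<bullet> \<eta>))) * \<Psi> (c *\<^sub>R \<eta>) \<partial>lborel)"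
  proof -
    have e1: "(c *\<^sub>R \<eta>) \<bullet> (c *\<^sub>R \<eta>) / (4 * s) = \<eta> \<bullet> \<eta>" for \<eta> :: "real^'n"
    proof -
      have "sqrt s * sqrt s = s" using s by simp
      then show ?thesis using s by (simp add: c_def mult.assoc[symmetric])
    qed
    have e2: "c * sqrt (pi / s) = 2 * sqrt pi"
      using s by (simp add: c_def real_sqrt_divide)
    have "(\<integral>\<theta>. complex_of_real (sqrt (pi / s) ^ CARD('n) * exp (- (\<theta> \<bullet> \<theta>) / (4 * s))) * \<Psi> \<theta> \<partial>lborel)
        = (\<bar>c\<bar>^DIM(real^'n)) *\<^sub>R (\<integral>\<eta>. complex_of_real (sqrt (pi / s) ^ CARD('n) * exp (- ((0 + c *\<^sub>R \<eta>) \<bullet> (0 + c *\<^sub>R \<eta>)) / (4 * s))) * \<Psi> (0 + c *\<^sub>R \<eta>) \<partial>lborel)"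
      using c by (intro lborel_integral_affine) simp
    also have "\<dots> = (c^CARD('n)) *\<^sub>R (\<integral>\<eta>. complex_of_real (sqrt (pi / s) ^ CARD('n)) * (complex_of_real (exp (- (\<eta> \<bullet> \<eta>))) * \<Psi> (c *\<^sub>R \<eta>)) \<partial>lborel)"
      using c by (simp add: e1 minus_divide_left[symmetric] mult.assoc del: inner_scaleR_left inner_scaleR_right)
    also have "\<dots> = complex_of_real ((c * sqrt (pi / s))^CARD('n)) * (\<integral>\<eta>. complex_of_real (exp (- (\<eta> \<bullet> \<eta>))) * \<Psi> (c *\<^sub>R \<eta>) \<partial>lborel)"
      by (simp add: integral_mult_right_zero scaleR_conv_of_real power_mult_distrib)
    finally show ?thesis unfolding e2 .
  qed
  show ?thesis
    unfolding step1 step2 step3 inner step4 c_def by (simp add: mult_ac)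
qed

lemma gauss1:
  shows "integrable lborel (\<lambda>x::'a::euclidean_space. exp (- (x \<bullet> x)))"
    and "(\<integral>x. exp (- (x \<bullet> x)) \<partial>(lborel::'a measure)) = sqrt pi ^ DIM('a)"
  using gaussN(1,2)[of 1, where 'a='a] by simp_all

lemma Phi_lim:
  assumes sf: "schwartz (\<Psi> :: real^'n \<Rightarrow> complex)" and P0: "\<Psi> 0 = 1"
  shows "(\<lambda>k. Phi \<Psi> (1 / real (Suc k))) \<longlonglongrightarrow>
           kap TYPE('n) * complex_of_real ((2 * sqrt pi)^CARD('n)) * complex_of_real (sqrt pi ^ CARD('n))"
proof -
  have d: "decay \<Psi>" using schwartz_decay[OF sf, of "[]"] by simp
  have [measurable]: "\<Psi> \<in> borel_measurable borel" using decay_measurable[OF d] .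
  have contP: "continuous_on UNIV \<Psi>" using d by (simp add: decay_def)
  obtain B where B: "\<And>x. (1 + norm x)^0 * norm (\<Psi> x) \<le> B"
    using sf unfolding schwartz_def by (metis iter_partial.simps(1))
  have B': "norm (\<Psi> x) \<le> B" for x using B[of x] by simp
  let ?c = "\<lambda>k::nat. 2 * sqrt (1 / real (Suc k))"
  have c0: "?c \<longlonglongrightarrow> 0"
  proof -
    have "(\<lambda>k. 1 / real (Suc k)) \<longlonglongrightarrow> 0"
      using LIMSEQ_Suc[OF lim_1_over_n[where 'a=real]] by simp
    from tendsto_mult[OF tendsto_const[of 2] tendsto_real_sqrt[OF this]] show ?thesis by simp
  qed
  have lim: "(\<lambda>k. \<integral>\<eta>. complex_of_real (exp (- (\<eta> \<bullet> \<eta>))) * \<Psi> (?c k *\<^sub>R \<eta>) \<partial>lborel)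
      \<longlonglongrightarrow> (\<integral>\<eta>. complex_of_real (exp (- (\<eta> \<bullet> \<eta>))) * \<Psi> (0 *\<^sub>R \<eta>) \<partial>lborel)"
  proof (rule integral_dominated_convergence[where w="\<lambda>\<eta>. B * exp (- (\<eta> \<bullet> \<eta>))"])
    show "(\<lambda>\<eta>. complex_of_real (exp (- (\<eta> \<bullet> \<eta>))) * \<Psi> (0 *\<^sub>R \<eta>)) \<in> borel_measurable lborel" by measurable
    show "(\<lambda>\<eta>. complex_of_real (exp (- (\<eta> \<bullet> \<eta>))) * \<Psi> (?c k *\<^sub>R \<eta>)) \<in> borel_measurable lborel" for k by measurable
    show "integrable lborel (\<lambda>\<eta>::real^'n. B * exp (- (\<eta> \<bullet> \<eta>)))"
      by (intro integrable_mult_right gauss1(1))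
    show "AE \<eta> in lborel. (\<lambda>k. complex_of_real (exp (- (\<eta> \<bullet> \<eta>))) * \<Psi> (?c k *\<^sub>R \<eta>))
        \<longlonglongrightarrow> complex_of_real (exp (- (\<eta> \<bullet> \<eta>))) * \<Psi> (0 *\<^sub>R \<eta>)"
    proof (rule AE_I2)
      fix \<eta> :: "real^'n"
      have t1: "(\<lambda>k. ?c k *\<^sub>R \<eta>) \<longlonglongrightarrow> 0 *\<^sub>R \<eta>" by (intro tendsto_scaleR c0 tendsto_const)
      have t2: "isCont \<Psi> (0 *\<^sub>R \<eta>)" using contP by (simp add: continuous_on_eq_continuous_at)
      have "(\<lambda>k. \<Psi> (?c k *\<^sub>R \<eta>)) \<longlonglongrightarrow> \<Psi> (0 *\<^sub>R \<eta>)"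
        by (rule isCont_tendsto_compose[OF t2 t1])
      then show "(\<lambda>k. complex_of_real (exp (- (\<eta> \<bullet> \<eta>))) * \<Psi> (?c k *\<^sub>R \<eta>))
        \<longlonglongrightarrow> complex_of_real (exp (- (\<eta> \<bullet> \<eta>))) * \<Psi> (0 *\<^sub>R \<eta>)"
        by (rule tendsto_mult_left)
    qed
    show "AE \<eta> in lborel. norm (complex_of_real (exp (- (\<eta> \<bullet> \<eta>))) * \<Psi> (?c k *\<^sub>R \<eta>)) \<le> B * exp (- (\<eta> \<bullet> \<eta>))" for k
      using B' by (intro AE_I2) (simp add: norm_mult mult.commute mult_left_mono)
  qed
  have val: "(\<integral>\<eta>. complex_of_real (exp (- (\<eta> \<bullet> \<eta>))) * \<Psi> (0 *\<^sub>R \<eta>) \<partial>(lborel::(real^'n) measure)) = complex_of_real (sqrt pi ^ CARD('n))"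
    using gauss1(2)[where 'a="real^'n"] by (simp add: P0)
  have eqP: "Phi \<Psi> (1 / real (Suc k)) = kap TYPE('n) * complex_of_real ((2 * sqrt pi)^CARD('n))
           * (\<integral>\<eta>. complex_of_real (exp (- (\<eta> \<bullet> \<eta>))) * \<Psi> (?c k *\<^sub>R \<eta>) \<partial>lborel)" for k
    by (rule Phi_formula[OF sf]) simp
  show ?thesis
    unfolding eqP using tendsto_mult_left[OF lim[unfolded val]] by simp
qed

lemma Phi0:
  assumes sf: "schwartz (\<Psi> :: real^'n \<Rightarrow> complex)" and P0: "\<Psi> 0 = 1"
  shows "Phi \<Psi> 0 \<noteq> 0"
proof -
  have "(\<lambda>k. Phi \<Psi> (1 / real (Suc k))) \<longlonglongrightarrow> Phi \<Psi> 0"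
    by (rule Phi_cont[OF sf]) (use LIMSEQ_Suc[OF lim_1_over_n[where 'a=real]] in simp_all)
  from LIMSEQ_unique[OF this Phi_lim[OF sf P0]] show ?thesis by simp
qed


inductive_set polyf :: "(real^'n::finite \<Rightarrow> complex) set" where
  pconst: "(\<lambda>_. a) \<in> polyf"
| pcoord: "(\<lambda>y. complex_of_real (y $ (i::'n))) \<in> polyf"
| padd: "p \<in> polyf \<Longrightarrow> q \<in> polyf \<Longrightarrow> (\<lambda>y. p y + q y) \<in> polyf"
| pmult: "p \<in> polyf \<Longrightarrow> q \<in> polyf \<Longrightarrow> (\<lambda>y. p y * q y) \<in> polyf"

lemma polyf_cont: "p \<in> polyf \<Longrightarrow> continuous_on UNIV p"
  by (induction rule: polyf.induct) (auto intro!: continuous_intros)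

lemma polyf_deriv:
  fixes p :: "real^'n::finite \<Rightarrow> complex" and j :: 'n
  shows "p \<in> polyf \<Longrightarrow> \<exists>q\<in>polyf. \<forall>y. ((\<lambda>t. p (y + t *\<^sub>R axis j 1)) has_vector_derivative q y) (at 0)"
proof (induction rule: polyf.induct)
  case (pconst a)
  show ?case by (intro bexI[of _ "\<lambda>_. 0"] polyf.pconst allI) simp
next
  case (pcoord i)
  have "((\<lambda>t::real. complex_of_real ((y + t *\<^sub>R axis j 1) $ i)) has_vector_derivative complex_of_real (axis j 1 $ i)) (at 0)" for y
    by (auto intro!: derivative_eq_intros)
  then show ?case by (intro bexI[of _ "\<lambda>_. complex_of_real (axis j 1 $ i)"] polyf.pconst) auto
next
  case (padd p q)
  then obtain p' q' where p': "p' \<in> polyf" "\<And>y. ((\<lambda>t. p (y + t *\<^sub>R axis j 1)) has_vector_derivative p' y) (at 0)"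
    and q': "q' \<in> polyf" "\<And>y. ((\<lambda>t. q (y + t *\<^sub>R axis j 1)) has_vector_derivative q' y) (at 0)" by blast
  show ?case
    by (intro bexI[of _ "\<lambda>y. p' y + q' y"] polyf.padd p' q' allI has_vector_derivative_add)
next
  case (pmult p q)
  then obtain p' q' where p': "p' \<in> polyf" "\<And>y. ((\<lambda>t. p (y + t *\<^sub>R axis j 1)) has_vector_derivative p' y) (at 0)"
    and q': "q' \<in> polyf" "\<And>y. ((\<lambda>t. q (y + t *\<^sub>R axis j 1)) has_vector_derivative q' y) (at 0)" by blast
  have "((\<lambda>t. p (y + t *\<^sub>R axis j 1) * q (y + t *\<^sub>R axis j 1)) has_vector_derivative (p y * q' y + p' y * q y)) (at 0)" for y
    using has_vector_derivative_mult[OF p'(2)[of y] q'(2)[of y]] by simp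
  then show ?case
    by (intro bexI[of _ "\<lambda>y. p y * q' y + p' y * q y"] polyf.padd polyf.pmult p' q' pmult.hyps) auto
qed

lemma polyf_bound:
  fixes p :: "real^'n::finite \<Rightarrow> complex"
  shows "p \<in> polyf \<Longrightarrow> \<exists>C k. 0 \<le> C \<and> (\<forall>y. norm (p y) \<le> C * (1 + norm y)^k)"
proof (induction rule: polyf.induct)
  case (pconst a)
  show ?case by (intro exI[of _ "norm a"] exI[of _ 0]) simp
next
  case (pcoord i)
  have "norm (complex_of_real (y $ i)) \<le> 1 * (1 + norm y)^1" for y :: "real^'n"
    using component_le_norm_cart[of y i] by simp
  then show ?case by (intro exI[of _ "1::real"] exI[of _ "1::nat"] conjI allI) simp_all
next
  case (padd p q)
  then obtain C1 k1 C2 k2 where 1: "0 \<le> C1" "\<And>y. norm (p y) \<le> C1 * (1 + norm y)^k1"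
    and 2: "0 \<le> C2" "\<And>y. norm (q y) \<le> C2 * (1 + norm y)^k2" by blast
  have "norm (p y + q y) \<le> (C1 + C2) * (1 + norm y)^(k1 + k2)" for y
  proof -
    have a: "(1 + norm y)^k1 \<le> (1 + norm y)^(k1 + k2)" "(1 + norm y)^k2 \<le> (1 + norm y)^(k1 + k2)"
      by (intro power_increasing; simp)+
    have "norm (p y + q y) \<le> C1 * (1 + norm y)^k1 + C2 * (1 + norm y)^k2"
      using 1(2)[of y] 2(2)[of y] norm_triangle_ineq[of "p y" "q y"] by linarith
    also have "\<dots> \<le> C1 * (1 + norm y)^(k1 + k2) + C2 * (1 + norm y)^(k1 + k2)"
      using a 1(1) 2(1) by (intro add_mono mult_left_mono) auto
    finally show ?thesis by (simp add: algebra_simps)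
  qed
  then show ?case using 1(1) 2(1) by (intro exI[of _ "C1 + C2"] exI[of _ "k1 + k2"]) auto
next
  case (pmult p q)
  then obtain C1 k1 C2 k2 where 1: "0 \<le> C1" "\<And>y. norm (p y) \<le> C1 * (1 + norm y)^k1"
    and 2: "0 \<le> C2" "\<And>y. norm (q y) \<le> C2 * (1 + norm y)^k2" by blast
  have "norm (p y * q y) \<le> (C1 * C2) * (1 + norm y)^(k1 + k2)" for y
  proof -
    have "norm (p y * q y) \<le> (C1 * (1 + norm y)^k1) * (C2 * (1 + norm y)^k2)"
      unfolding norm_mult using 1 2 by (intro mult_mono) auto
    then show ?thesis by (simp add: power_add mult_ac)
  qed
  then show ?case using 1(1) 2(1) by (intro exI[of _ "C1 * C2"] exI[of _ "k1 + k2"]) auto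
qed

lemma poly_exp_bound:
  fixes c :: real assumes c: "0 < c"
  shows "\<exists>D. \<forall>r\<ge>0. (1 + r)^N * exp (- c * r\<^sup>2) \<le> D"
proof -
  define a where "a = c / (real N + 1)"
  have a: "0 < a" using c by (simp add: a_def)
  define K where "K = max 1 (1 / a)"
  have K1: "1 \<le> K" and Ka: "1 \<le> K * a" using a by (auto simp: K_def field_simps max_def)
  have "(1 + r)^N * exp (- c * r\<^sup>2) \<le> (2 * K)^N" if r: "r \<ge> 0" for r
  proof -
    have "(1 + r)^N \<le> ((1 + r)\<^sup>2)^N" using r by (intro power_mono) (auto simp: power2_eq_square)
    also have "(1 + r)\<^sup>2 \<le> 2 * (1 + r\<^sup>2)"
    proof -
      have h: "0 \<le> (r - 1) * (r - 1)" by simp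
      then show ?thesis unfolding power2_eq_square by (simp add: algebra_simps)
    qed
    then have "((1 + r)\<^sup>2)^N \<le> (2 * (1 + r\<^sup>2))^N" by (intro power_mono) auto
    also have "1 + r\<^sup>2 \<le> K * (1 + a * r\<^sup>2)"
    proof -
      have "r\<^sup>2 \<le> (K * a) * r\<^sup>2" using Ka by (simp add: mult_le_cancel_right1)
      then show ?thesis using K1 by (simp add: algebra_simps)
    qed
    then have "(2 * (1 + r\<^sup>2))^N \<le> (2 * (K * (1 + a * r\<^sup>2)))^N" by (intro power_mono) auto
    also have "(1 + a * r\<^sup>2)^N \<le> (exp (a * r\<^sup>2))^N" by (intro power_mono) (use a in auto)
    then have "(2 * (K * (1 + a * r\<^sup>2)))^N \<le> (2 * K)^N * exp (a * r\<^sup>2)^N"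
      using K1 by (simp add: power_mult_distrib mult.assoc mult_left_mono)
    also have "exp (a * r\<^sup>2)^N = exp (real N * a * r\<^sup>2)" by (simp add: exp_of_nat_mult[symmetric] mult.assoc)
    also have "\<dots> \<le> exp (c * r\<^sup>2)"
    proof -
      have "real N * a \<le> c" using c by (simp add: a_def field_simps)
      then show ?thesis by (intro exp_le_cancel_iff[THEN iffD2] mult_right_mono) auto
    qed
    finally have "(1 + r)^N \<le> (2 * K)^N * exp (c * r\<^sup>2)" using K1 by (simp add: mult_left_mono)
    then show ?thesis by (simp add: exp_minus field_simps)
  qed
  then show ?thesis by blast
qed

definition gau :: "real \<Rightarrow> real^'n::finite \<Rightarrow> complex" where
  "gau c y = complex_of_real (exp (- c * (y \<bullet> y)))"

lemma gau_cont: "continuous_on UNIV (gau c)"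
  unfolding gau_def by (intro continuous_intros)

lemma gau_deriv:
  "((\<lambda>t. gau c (y + t *\<^sub>R axis j 1)) has_vector_derivative complex_of_real (- 2 * c * (y $ j)) * gau c y) (at 0)"
proof -
  have eq: "(\<lambda>t. gau c (y + t *\<^sub>R axis j 1)) = (\<lambda>t. complex_of_real (exp (- c * (y \<bullet> y + 2 * t * (y $ j) + t\<^sup>2))))"
    by (rule ext) (simp add: gau_def inner_add_left inner_add_right inner_axis inner_axis' inner_axis_axis
        algebra_simps power2_eq_square)
  have "((\<lambda>t. exp (- c * (y \<bullet> y + 2 * t * (y $ j) + t\<^sup>2))) has_field_derivative
      exp (- c * (y \<bullet> y + 2 * 0 * (y $ j) + 0\<^sup>2)) * (- c * (2 * (y $ j) + 2 * 0))) (at 0)"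
    by (auto intro!: derivative_eq_intros)
  then have "((\<lambda>t. complex_of_real (exp (- c * (y \<bullet> y + 2 * t * (y $ j) + t\<^sup>2)))) has_vector_derivative
      complex_of_real (exp (- c * (y \<bullet> y + 2 * 0 * (y $ j) + 0\<^sup>2)) * (- c * (2 * (y $ j) + 2 * 0)))) (at 0)"
    by (rule has_vector_derivative_of_real)
  then show ?thesis
    unfolding eq by (simp add: gau_def mult_ac)
qed

lemma gau_iter:
  "\<exists>q\<in>polyf. iter_partial is (gau c :: real^'n::finite \<Rightarrow> complex) = (\<lambda>y. q y * gau c y)"
proof (induction "is")
  case Nil
  show ?case by (intro bexI[of _ "\<lambda>_. 1"] polyf.pconst) auto
next
  case (Cons i "is")
  then obtain q where q: "q \<in> polyf" "iter_partial is (gau c :: real^'n \<Rightarrow> complex) = (\<lambda>y. q y * gau c y)" by blast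
  obtain q' where q': "q' \<in> polyf" "\<And>y. ((\<lambda>t. q (y + t *\<^sub>R axis i 1)) has_vector_derivative q' y) (at 0)"
    using polyf_deriv[OF q(1), of i] by blast
  let ?r = "\<lambda>y. q y * (complex_of_real (- 2 * c) * complex_of_real (y $ i)) + q' y"
  have r: "?r \<in> polyf"
    by (intro polyf.padd polyf.pmult polyf.pconst polyf.pcoord q q')
  have "partial_deriv i (\<lambda>y. q y * gau c y) = (\<lambda>y. ?r y * gau c y)"
  proof (rule ext)
    fix y :: "real^'n"
    have "((\<lambda>t. q (y + t *\<^sub>R axis i 1) * gau c (y + t *\<^sub>R axis i 1)) has_vector_derivative
        q y * (complex_of_real (- 2 * c * (y $ i)) * gau c y) + q' y * gau c y) (at 0)"
      using has_vector_derivative_mult[OF q'(2)[of y] gau_deriv[of c y i]] by simp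
    then show "partial_deriv i (\<lambda>y. q y * gau c y) y = ?r y * gau c y"
      unfolding partial_deriv_def by (subst vector_derivative_at) (auto simp: algebra_simps)
  qed
  then show ?case using r q(2) by auto
qed

lemma gau_schwartz:
  assumes c: "0 < c"
  shows "schwartz (gau c :: real^'n::finite \<Rightarrow> complex)"
  unfolding schwartz_def
proof (intro conjI allI)
  fix "is" :: "'n list"
  obtain q where q: "q \<in> polyf" "iter_partial is (gau c :: real^'n \<Rightarrow> complex) = (\<lambda>y. q y * gau c y)"
    using gau_iter by blast
  show "continuous_on UNIV (iter_partial is (gau c :: real^'n \<Rightarrow> complex))"
    unfolding q(2) using polyf_cont[OF q(1)] gau_cont by (intro continuous_intros) auto
  fix i :: 'n and x :: "real^'n"
  obtain q' where q': "\<And>y. ((\<lambda>t. q (y + t *\<^sub>R axis i 1)) has_vector_derivative q' y) (at 0)"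
    using polyf_deriv[OF q(1), of i] by blast
  show "(\<lambda>t. iter_partial is (gau c) (x + t *\<^sub>R axis i 1)) differentiable at 0"
    unfolding q(2) by (rule differentiableI_vector, rule has_vector_derivative_mult[OF q' gau_deriv])
next
  fix "is" :: "'n list" and m :: nat
  obtain q where q: "q \<in> polyf" "iter_partial is (gau c :: real^'n \<Rightarrow> complex) = (\<lambda>y. q y * gau c y)"
    using gau_iter by blast
  obtain C k where C: "0 \<le> C" "\<And>y. norm (q y) \<le> C * (1 + norm y)^k" using polyf_bound[OF q(1)] by blast
  obtain D where D: "\<And>r. r \<ge> 0 \<Longrightarrow> (1 + r)^(m + k) * exp (- c * r\<^sup>2) \<le> D"
    using poly_exp_bound[OF c, of "m + k"] by blast
  have "(1 + norm x)^m * norm (iter_partial is (gau c) x) \<le> C * D" for x :: "real^'n"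
  proof -
    have ng: "norm (gau c x) = exp (- c * (norm x)\<^sup>2)" by (simp add: gau_def power2_norm_eq_inner)
    have "(1 + norm x)^m * norm (iter_partial is (gau c) x) = (1 + norm x)^m * norm (q x) * exp (- c * (norm x)\<^sup>2)"
      by (simp add: q(2) norm_mult ng)
    also have "\<dots> \<le> (1 + norm x)^m * (C * (1 + norm x)^k) * exp (- c * (norm x)\<^sup>2)"
      by (intro mult_right_mono mult_left_mono C(2)) auto
    also have "\<dots> = C * ((1 + norm x)^(m + k) * exp (- c * (norm x)\<^sup>2))"
      by (simp add: power_add mult_ac)
    also have "\<dots> \<le> C * D" by (intro mult_left_mono D C(1)) simp
    finally show ?thesis .
  qed
  then show "\<exists>C. \<forall>x. (1 + norm x)^m * norm (iter_partial is (gau c) x) \<le> C" by blast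
qed

lemma gau_L2:
  assumes c: "0 < c"
  shows "L2_norm_sq (gau c :: real^'n::finite \<Rightarrow> complex) = ennreal (sqrt (pi / (2 * c)) ^ CARD('n))"
proof -
  have "(norm (gau c x))\<^sup>2 = exp (- (2 * c) * (x \<bullet> x))" for x :: "real^'n"
    by (simp add: gau_def power2_eq_square exp_add[symmetric])
  then show ?thesis
    unfolding L2_norm_sq_def using gaussN(3)[of "2 * c", where 'a="real^'n"] c by simp
qed


lemma Phi_pos_near0:
  assumes sf: "schwartz (\<Psi> :: real^'n \<Rightarrow> complex)" and P0: "\<Psi> 0 = 1"
  shows "\<exists>s0>0. \<exists>\<delta>>0. \<forall>s. 0 \<le> s \<longrightarrow> s \<le> s0 \<longrightarrow> \<delta> \<le> norm (Phi \<Psi> s)"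
proof (rule ccontr)
  define \<delta> where "\<delta> = norm (Phi \<Psi> 0) / 2"
  have d: "\<delta> > 0" using Phi0[OF sf P0] by (simp add: \<delta>_def)
  assume "\<not> ?thesis"
  then have "\<forall>k::nat. \<exists>s. 0 \<le> s \<and> s \<le> 1 / real (Suc k) \<and> norm (Phi \<Psi> s) < \<delta>"
    using d by (metis not_le of_nat_0_less_iff zero_less_Suc zero_less_divide_1_iff)
  then obtain s where s: "\<And>k. 0 \<le> s k" "\<And>k. s k \<le> 1 / real (Suc k)" "\<And>k. norm (Phi \<Psi> (s k)) < \<delta>"
    by metis
  have "s \<longlonglongrightarrow> 0"
  proof (rule real_tendsto_sandwich[where f="\<lambda>_. 0" and h="\<lambda>k. 1 / real (Suc k)"])
    show "(\<lambda>k. 1 / real (Suc k)) \<longlonglongrightarrow> 0"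
      using LIMSEQ_Suc[OF lim_1_over_n[where 'a=real]] by simp
  qed (use s in auto)
  from tendsto_norm[OF Phi_cont[OF sf s(1) this]]
  have "norm (Phi \<Psi> 0) \<le> \<delta>"
    by (rule LIMSEQ_le_const2) (use s(3) in \<open>auto intro: less_imp_le\<close>)
  then show False using d by (simp add: \<delta>_def)
qed

lemma Phi_HK:
  assumes sf: "schwartz (\<Psi> :: real^'n \<Rightarrow> complex)" and s: "0 \<le> s"
  shows "integral UNIV (\<lambda>z. complex_of_real (exp (- s * (z \<bullet> z))) * fourier \<Psi> z) = Phi \<Psi> s"
proof -
  have [measurable]: "fourier \<Psi> \<in> borel_measurable borel"
    using F_integrable[OF sf] by (simp add: borel_measurable_integrable)
  have "integrable lborel (\<lambda>z. complex_of_real (exp (- s * (z \<bullet> z))) * fourier \<Psi> z)"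
  proof (rule Bochner_Integration.integrable_bound[OF integrable_norm[OF F_integrable[OF sf]]])
    show "(\<lambda>z. complex_of_real (exp (- s * (z \<bullet> z))) * fourier \<Psi> z) \<in> borel_measurable lborel" by measurable
    show "AE z in lborel. norm (complex_of_real (exp (- s * (z \<bullet> z))) * fourier \<Psi> z) \<le> norm (norm (fourier \<Psi> z))"
    proof (rule AE_I2)
      fix z :: "real^'n"
      have "exp (- s * (z \<bullet> z)) \<le> 1" using s by (simp add: mult_nonneg_nonneg)
      then show "norm (complex_of_real (exp (- s * (z \<bullet> z))) * fourier \<Psi> z) \<le> norm (norm (fourier \<Psi> z))"
        by (simp add: norm_mult mult_left_le_one_le)
    qed
  qed
  then show ?thesis unfolding Phi_def by (rule integral_lborel)
qed

lemma gau_scale: "gau c (a *\<^sub>R z) = complex_of_real (exp (- (c * a\<^sup>2) * (z \<bullet> z)))"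
  by (simp add: gau_def power2_eq_square mult_ac)

lemma box_measure: "0 \<le> r \<Longrightarrow> emeasure lborel (box 0 ((\<chi> i. r) :: real^'n)) = ennreal (r ^ CARD('n))"
proof -
  assume r: "0 \<le> r"
  have "\<forall>b\<in>(Basis :: (real^'n) set). (0::real^'n) \<bullet> b \<le> (\<chi> i. r) \<bullet> b"
    using r by (auto simp: Basis_vec_real inner_axis)
  moreover have "(\<Prod>b\<in>(Basis::(real^'n) set). ((\<chi> i. r) - 0) \<bullet> b) = r ^ CARD('n)"
    using prod_Basis_vec[where g="\<lambda>t. t" and x="(\<chi> i. r) - (0::real^'n)"] by simp
  ultimately show ?thesis by (simp add: emeasure_lborel_box_eq)
qed

theorem mainTheorem2:
  fixes \<beta> :: real
    and \<Psi> :: "real^'n::finite \<Rightarrow> complex"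
    and g :: "real^'n \<Rightarrow> real"
    and A :: "(real^'n \<Rightarrow> complex) \<Rightarrow> (real^'n \<Rightarrow> complex)"
  assumes beta: "0 < \<beta>" "\<beta> < 1"
    and Psi: "schwartz \<Psi>" "\<Psi> 0 = 1"
    and g_cont: "continuous_on (open_cube \<beta>) g"
    and g_nonneg: "\<forall>x\<in>open_cube \<beta>. 0 \<le> g x"
    and g_lim: "((\<lambda>x. g x / norm x) \<longlongrightarrow> 0) (at 0 within open_cube \<beta>)"
    and g_mono: "\<forall>i x y. x \<in> open_cube \<beta> \<longrightarrow> y \<in> open_cube \<beta> \<longrightarrow>
                   (\<forall>j. j \<noteq> i \<longrightarrow> x $ j = y $ j) \<longrightarrow> x $ i \<le> y $ i \<longrightarrow> g x \<le> g y"
    and A_def: "\<forall>u. schwartz u \<longrightarrow> (\<forall>x\<in>open_cube \<beta>.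
                   A u x = integral UNIV (\<lambda>z. u (g x *\<^sub>R z) * fourier \<Psi> z))"
  shows "\<not> (\<exists>C>0. \<forall>u. schwartz u \<longrightarrow>
              L2_norm_sq (A u) \<le> ennreal (C\<^sup>2) * L2_norm_sq u)"
proof
  assume "\<exists>C>0. \<forall>u. schwartz u \<longrightarrow> L2_norm_sq (A u) \<le> ennreal (C\<^sup>2) * L2_norm_sq u"
  then obtain C where C0: "C > 0"
    and CB: "\<And>u. schwartz u \<Longrightarrow> L2_norm_sq (A u) \<le> ennreal (C\<^sup>2) * L2_norm_sq u" by blast
  obtain s0 \<delta> where s0: "s0 > 0" and d: "\<delta> > 0" and sd: "\<And>s. 0 \<le> s \<Longrightarrow> s \<le> s0 \<Longrightarrow> \<delta> \<le> norm (Phi \<Psi> s)"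
    using Phi_pos_near0[OF Psi] by blast
  define N where "N = CARD('n)"
  have N1: "1 \<le> N" by (simp add: N_def Suc_leI)
  define M where "M = C\<^sup>2 / \<delta>\<^sup>2 + 1"
  have M1: "1 \<le> M" using d by (simp add: M_def)
  have MC: "C\<^sup>2 < \<delta>\<^sup>2 * M" using d by (simp add: M_def field_simps)
  define \<eta> where "\<eta> = sqrt (s0 / pi) / (real N * M)"
  have eta: "\<eta> > 0" using s0 N1 M1 by (simp add: \<eta>_def)
  have "\<forall>\<^sub>F x in at 0 within open_cube \<beta>. dist (g x / norm x) 0 < \<eta>"
    using g_lim eta unfolding tendsto_iff by blast
  then obtain \<rho> where rho: "\<rho> > 0"
    and rhoP: "\<And>x. x \<in> open_cube \<beta> \<Longrightarrow> x \<noteq> 0 \<Longrightarrow> dist x 0 < \<rho> \<Longrightarrow> dist (g x / norm x) 0 < \<eta>"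
    unfolding eventually_at by blast
  define r where "r = min \<beta> (\<rho> / (2 * real N))"
  have r0: "r > 0" using beta rho N1 by (simp add: r_def)
  have rb: "r \<le> \<beta>" by (simp add: r_def)
  have rN: "real N * r < \<rho>"
  proof -
    have "real N * r \<le> real N * (\<rho> / (2 * real N))" by (intro mult_left_mono) (auto simp: r_def)
    also have "\<dots> = \<rho> / 2" using N1 by simp
    finally show ?thesis using rho by simp
  qed
  define c where "c = pi * M\<^sup>2 / (2 * r\<^sup>2)"
  have c0: "c > 0" using r0 M1 by (simp add: c_def)
  define Q where "Q = box 0 ((\<chi> i. r) :: real^'n)"
  have inQ: "\<delta> \<le> norm (A (gau c) x)" if x: "x \<in> Q" for x
  proof -
    have xi: "0 < x $ i \<and> x $ i < r" for i using x by (simp add: Q_def mem_box_cart)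
    have xc: "x \<in> open_cube \<beta>" using xi rb by (auto simp: open_cube_def intro: less_le_trans)
    have x0: "x \<noteq> 0"
    proof
      assume "x = 0"
      then show False using xi[of undefined] by simp
    qed
    have "norm x \<le> (\<Sum>i\<in>UNIV. \<bar>x $ i\<bar>)" by (rule norm_le_l1_cart)
    also have "\<dots> < (\<Sum>i\<in>(UNIV::'n set). r)"
    proof (rule sum_strict_mono)
      fix i :: 'n
      show "\<bar>x $ i\<bar> < r" using xi[of i] by simp
    qed auto
    also have "\<dots> = real N * r" by (simp add: N_def)
    finally have nx: "norm x < real N * r" .
    have "dist (g x / norm x) 0 < \<eta>" using rhoP[OF xc x0] nx rN by simp
    then have "\<bar>g x\<bar> / norm x < \<eta>" by (simp add: abs_divide)
    then have "\<bar>g x\<bar> < \<eta> * norm x" using x0 by (simp add: divide_less_eq)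
    also have "\<dots> \<le> \<eta> * (real N * r)" using nx eta by simp
    finally have gx: "\<bar>g x\<bar> \<le> \<eta> * (real N * r)" by simp
    have g2: "(g x)\<^sup>2 \<le> (\<eta> * (real N * r))\<^sup>2"
      using gx by (metis abs_ge_zero abs_le_square_iff abs_of_nonneg order_trans eta r0 mult_pos_pos of_nat_0_le_iff
          less_imp_le mult_nonneg_nonneg)
    have "c * (g x)\<^sup>2 \<le> c * (\<eta> * (real N * r))\<^sup>2" using g2 c0 by simp
    also have "c * (\<eta> * (real N * r))\<^sup>2 = s0 / 2"
    proof -
      have e: "(\<eta> * real N * M)\<^sup>2 = s0 / pi"
        using N1 M1 s0 by (simp add: \<eta>_def)
      have "c * (\<eta> * (real N * r))\<^sup>2 = pi * (\<eta> * real N * M)\<^sup>2 / 2"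
        using r0 by (simp add: c_def power_mult_distrib field_simps)
      then show ?thesis using e by simp
    qed
    finally have s1: "c * (g x)\<^sup>2 \<le> s0" using s0 by simp
    have s2: "0 \<le> c * (g x)\<^sup>2" using c0 by simp
    have "A (gau c) x = integral UNIV (\<lambda>z. gau c (g x *\<^sub>R z) * fourier \<Psi> z)"
      using A_def gau_schwartz[OF c0] xc by blast
    also have "\<dots> = integral UNIV (\<lambda>z. complex_of_real (exp (- (c * (g x)\<^sup>2) * (z \<bullet> z))) * fourier \<Psi> z)"
      by (simp only: gau_scale)
    also have "\<dots> = Phi \<Psi> (c * (g x)\<^sup>2)" by (rule Phi_HK[OF Psi(1) s2])
    finally show ?thesis using sd[OF s2 s1] by simp
  qed
  have Qm: "Q \<in> sets lborel" by (simp add: Q_def)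
  have lower: "ennreal (\<delta>\<^sup>2 * r ^ N) \<le> L2_norm_sq (A (gau c))"
  proof -
    have "ennreal (\<delta>\<^sup>2 * r ^ N) = ennreal (\<delta>\<^sup>2) * emeasure lborel Q"
      using box_measure[of r, where 'n='n] r0 d by (simp add: Q_def N_def ennreal_mult)
    also have "\<dots> = (\<integral>\<^sup>+ x. ennreal (\<delta>\<^sup>2) * indicator Q x \<partial>lborel)"
      by (rule nn_integral_cmult_indicator[OF Qm, symmetric])
    also have "\<dots> \<le> (\<integral>\<^sup>+ x. ennreal ((norm (A (gau c) x))\<^sup>2) \<partial>lborel)"
    proof (rule nn_integral_mono)
      fix x :: "real^'n"
      show "ennreal (\<delta>\<^sup>2) * indicator Q x \<le> ennreal ((norm (A (gau c) x))\<^sup>2)"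
      proof (cases "x \<in> Q")
        case True
        then have "\<delta>\<^sup>2 \<le> (norm (A (gau c) x))\<^sup>2" using inQ d by (intro power_mono) auto
        then show ?thesis using True by simp
      qed simp
    qed
    finally show ?thesis by (simp add: L2_norm_sq_def)
  qed
  have sq: "sqrt (pi / (2 * c)) = r / M"
  proof -
    have "pi / (2 * c) = (r / M)\<^sup>2" using r0 M1 by (simp add: c_def power_divide field_simps)
    then show ?thesis using r0 M1 by simp
  qed
  have upper: "L2_norm_sq (A (gau c)) \<le> ennreal (C\<^sup>2 * (r / M) ^ N)"
  proof -
    have e: "ennreal (C\<^sup>2 * (r / M) ^ N) = ennreal (C\<^sup>2) * ennreal ((r / M) ^ N)"
      by (rule ennreal_mult) (use r0 M1 in auto)
    show ?thesis using CB[OF gau_schwartz[OF c0]] gau_L2[OF c0, where 'n='n] sq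
      unfolding e by (simp add: N_def)
  qed
  from lower upper have "ennreal (\<delta>\<^sup>2 * r ^ N) \<le> ennreal (C\<^sup>2 * (r / M) ^ N)" by (rule order_trans)
  then have le: "\<delta>\<^sup>2 * r ^ N \<le> C\<^sup>2 * (r / M) ^ N"
    using r0 M1 by (subst (asm) ennreal_le_iff) auto
  have rN0: "0 < r ^ N" using r0 by simp
  have MN0: "0 < M ^ N" using M1 by simp
  have "\<delta>\<^sup>2 * M ^ N \<le> C\<^sup>2"
  proof -
    have "\<delta>\<^sup>2 * r ^ N * M ^ N \<le> C\<^sup>2 * (r / M) ^ N * M ^ N" using le MN0 by (simp add: mult_right_mono)
    also have "\<dots> = C\<^sup>2 * r ^ N" using M1 by (simp add: power_divide)
    finally have "(\<delta>\<^sup>2 * M ^ N) * r ^ N \<le> C\<^sup>2 * r ^ N" by (simp add: mult_ac)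
    then show ?thesis using rN0 by simp
  qed
  moreover have "M \<le> M ^ N" using M1 N1 by (metis power_increasing power_one_right)
  then have "\<delta>\<^sup>2 * M \<le> \<delta>\<^sup>2 * M ^ N" using d by simp
  ultimately show False using MC by simp
qed

end
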